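(* Fix $k\ge1$ and let $P(z)=P^{(k)}(q,t,u;z)=\sum_{n\ge0}\sum_{\pi\in\mathcal{Q}^k_n}q^{\operatorname{asc}(\pi)}t^{\operatorname{des}(\pi)}u^{\operatorname{plat}(\pi)}\frac{z^n}{n!}$. Then $P$ satisfies the differential equation $$P'(z)=(P(z)-1+q)(P(z)-1+t)(P(z)-1+u)^{k-1}$$ (derivative with respect to $z$), with initial condition $P(0)=1$.
   Context: $\mathcal{Q}^k_n$ ($k$-Stirling permutations) is the set of permutations $\pi$ of the multiset $\{1^k,\dots,n^k\}$ (each of $1,\dots,n$ appearing $k$ times) avoiding the pattern $212$, i.e. there are no indices $i<j<\ell$ with $\pi_i=\pi_\ell>\pi_j$; $\mathcal{Q}^k_0$ consists of the empty sequence. For a sequence $\pi_1\cdots\pi_r$: $i\in\{1,\dots,r\}$ is a descent if $\pi_i>\pi_{i+1}$ or $i=r$; $i\in\{0,\dots,r-1\}$ is an ascent if $i=0$ or $\pi_i<\pi_{i+1}$; $i\in\{1,\dots,r-1\}$ is a plateau if $\pi_i=\pi_{i+1}$; $\operatorname{des},\operatorname{asc},\operatorname{plat}$ count these. *)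

theory Defs
  imports "HOL-Library.Multiset" "HOL-Computational_Algebra.Formal_Power_Series"
begin

(* sequences are lists; positions are 1-based as in the paper: pos1 xs i = pi_i *)
definition pos1 :: "nat list \<Rightarrow> nat \<Rightarrow> nat" where
  "pos1 xs i = xs ! (i - 1)"

definition avoids212 :: "nat list \<Rightarrow> bool" where
  "avoids212 xs \<longleftrightarrow> \<not> (\<exists>i j l. 1 \<le> i \<and> i < j \<and> j < l \<and> l \<le> length xs \<and>
       pos1 xs i = pos1 xs l \<and> pos1 xs i > pos1 xs j)"

definition stirling_perms :: "nat \<Rightarrow> nat \<Rightarrow> nat list set" where
  "stirling_perms k n = {xs. mset xs = (\<Sum>i\<in>{1..n}. replicate_mset k i) \<and> avoids212 xs}"

definition des :: "nat list \<Rightarrow> nat" where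
  "des xs = card {i\<in>{1..length xs}. pos1 xs i > pos1 xs (i + 1) \<or> i = length xs}"

definition asc :: "nat list \<Rightarrow> nat" where
  "asc xs = card {i\<in>{0..<length xs}. i = 0 \<or> pos1 xs i < pos1 xs (i + 1)}"

definition plat :: "nat list \<Rightarrow> nat" where
  "plat xs = card {i\<in>{1..<length xs}. pos1 xs i = pos1 xs (i + 1)}"

(* exponential generating function P^(k)(q,t,u;z), coefficients evaluated at q,t,u *)
definition stirling_egf :: "nat \<Rightarrow> 'a::field_char_0 \<Rightarrow> 'a \<Rightarrow> 'a \<Rightarrow> 'a fps" where
  "stirling_egf k q t u = Abs_fps (\<lambda>n.
     (\<Sum>xs\<in>stirling_perms k n. q ^ asc xs * t ^ des xs * u ^ plat xs) / fact n)"

end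

theory Submission
  imports Defs
begin
unbundle fps_syntax

definition av :: "nat list \<Rightarrow> bool" where
  "av xs \<longleftrightarrow> (\<forall>i j l. i < j \<longrightarrow> j < l \<longrightarrow> l < length xs \<longrightarrow> xs ! i = xs ! l \<longrightarrow> xs ! i \<le> xs ! j)"

lemma avoids212_av: "avoids212 xs \<longleftrightarrow> av xs"
proof
  assume h: "avoids212 xs"
  show "av xs" unfolding av_def
  proof (intro allI impI)
    fix i j l assume a: "i < j" "j < l" "l < length xs" "xs ! i = xs ! l"
    show "xs ! i \<le> xs ! j"
    proof (rule ccontr)
      assume "\<not> xs ! i \<le> xs ! j"
      then have "1 \<le> Suc i \<and> Suc i < Suc j \<and> Suc j < Suc l \<and> Suc l \<le> length xs \<and>
         pos1 xs (Suc i) = pos1 xs (Suc l) \<and> pos1 xs (Suc i) > pos1 xs (Suc j)"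
        using a by (auto simp: pos1_def)
      then show False using h unfolding avoids212_def by blast
    qed
  qed
next
  assume h: "av xs"
  show "avoids212 xs" unfolding avoids212_def
  proof
    assume "\<exists>i j l. 1 \<le> i \<and> i < j \<and> j < l \<and> l \<le> length xs \<and>
       pos1 xs i = pos1 xs l \<and> pos1 xs i > pos1 xs j"
    then obtain i j l where a: "1 \<le> i" "i < j" "j < l" "l \<le> length xs"
       "xs ! (i-1) = xs ! (l-1)" "xs ! (i-1) > xs ! (j-1)" by (auto simp: pos1_def)
    have b: "i-1 < j-1" "j-1 < l-1" "l-1 < length xs" "xs ! (i-1) = xs ! (l-1)" using a by auto
    have "xs ! (i-1) \<le> xs ! (j-1)" using h b unfolding av_def by blast
    then show False using a by simp
  qed
qed

lemma av_appendD1: "av (xs @ ys) \<Longrightarrow> av xs"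
  unfolding av_def
proof (intro allI impI)
  fix i j l assume h: "\<forall>i j l. i < j \<longrightarrow> j < l \<longrightarrow> l < length (xs @ ys) \<longrightarrow> (xs @ ys) ! i = (xs @ ys) ! l \<longrightarrow> (xs @ ys) ! i \<le> (xs @ ys) ! j"
    and a: "i < j" "j < l" "l < length xs" "xs ! i = xs ! l"
  have "(xs @ ys) ! i \<le> (xs @ ys) ! j"
    using h[rule_format, of i j l] a by (simp add: nth_append)
  then show "xs ! i \<le> xs ! j" using a by (simp add: nth_append)
qed

lemma av_appendD2: "av (xs @ ys) \<Longrightarrow> av ys"
  unfolding av_def
proof (intro allI impI)
  fix i j l assume h: "\<forall>i j l. i < j \<longrightarrow> j < l \<longrightarrow> l < length (xs @ ys) \<longrightarrow> (xs @ ys) ! i = (xs @ ys) ! l \<longrightarrow> (xs @ ys) ! i \<le> (xs @ ys) ! j"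
    and a: "i < j" "j < l" "l < length ys" "ys ! i = ys ! l"
  have "(xs @ ys) ! (length xs + i) \<le> (xs @ ys) ! (length xs + j)"
    using h[rule_format, of "length xs + i" "length xs + j" "length xs + l"] a by (simp add: nth_append)
  then show "ys ! i \<le> ys ! j" by (simp add: nth_append)
qed

lemma av_append: "av xs \<Longrightarrow> av ys \<Longrightarrow> set xs \<inter> set ys = {} \<Longrightarrow> av (xs @ ys)"
  unfolding av_def
proof (intro allI impI)
  fix i j l
  assume hx: "\<forall>i j l. i < j \<longrightarrow> j < l \<longrightarrow> l < length xs \<longrightarrow> xs ! i = xs ! l \<longrightarrow> xs ! i \<le> xs ! j"
    and hy: "\<forall>i j l. i < j \<longrightarrow> j < l \<longrightarrow> l < length ys \<longrightarrow> ys ! i = ys ! l \<longrightarrow> ys ! i \<le> ys ! j"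
    and d: "set xs \<inter> set ys = {}"
    and a: "i < j" "j < l" "l < length (xs @ ys)" "(xs @ ys) ! i = (xs @ ys) ! l"
  consider "l < length xs" | "length xs \<le> i" | "i < length xs" "length xs \<le> l" by linarith
  then show "(xs @ ys) ! i \<le> (xs @ ys) ! j"
  proof cases
    case 1 then show ?thesis using hx a by (simp add: nth_append)
  next
    case 2
    then show ?thesis using hy[rule_format, of "i - length xs" "j - length xs" "l - length xs"] a
      by (simp add: nth_append)
  next
    case 3
    have e1: "(xs @ ys) ! i = xs ! i" using 3 by (simp add: nth_append)
    have e2: "(xs @ ys) ! l = ys ! (l - length xs)" using 3 by (simp add: nth_append)
    have "xs ! i \<in> set xs" using 3 by simp
    moreover have "ys ! (l - length xs) \<in> set ys" using 3 a by auto
    ultimately have False using d a(4) e1 e2 by auto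
    then show ?thesis ..
  qed
qed

lemma av_Cons: "av ys \<Longrightarrow> \<forall>y\<in>set ys. m \<le> y \<Longrightarrow> av (m # ys)"
  unfolding av_def
proof (intro allI impI)
  fix i j l
  assume hy: "\<forall>i j l. i < j \<longrightarrow> j < l \<longrightarrow> l < length ys \<longrightarrow> ys ! i = ys ! l \<longrightarrow> ys ! i \<le> ys ! j"
    and b: "\<forall>y\<in>set ys. m \<le> y"
    and a: "i < j" "j < l" "l < length (m # ys)" "(m # ys) ! i = (m # ys) ! l"
  show "(m # ys) ! i \<le> (m # ys) ! j"
  proof (cases i)
    case 0
    then show ?thesis using a b by (cases j) auto
  next
    case (Suc i')
    then show ?thesis using a hy[rule_format, of i' "j - 1" "l - 1"]
      by (cases j; cases l) auto
  qed
qed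

lemma av_mid: "av (s @ m # r) \<Longrightarrow> b \<in> set s \<Longrightarrow> b \<in> set r \<Longrightarrow> b \<le> m"
proof -
  assume h: "av (s @ m # r)" and b1: "b \<in> set s" and b2: "b \<in> set r"
  obtain i where i: "i < length s" "s ! i = b" using b1 by (auto simp: in_set_conv_nth)
  obtain l where l: "l < length r" "r ! l = b" using b2 by (auto simp: in_set_conv_nth)
  have H: "\<forall>i j l'. i < j \<longrightarrow> j < l' \<longrightarrow> l' < length (s @ m # r) \<longrightarrow> (s @ m # r) ! i = (s @ m # r) ! l' \<longrightarrow> (s @ m # r) ! i \<le> (s @ m # r) ! j"
    using h unfolding av_def by blast
  have "(s @ m # r) ! i \<le> (s @ m # r) ! (length s)"
    using H[rule_format, of i "length s" "length s + 1 + l"] i l by (simp add: nth_append)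
  then show ?thesis using i by (simp add: nth_append)
qed


fun spl :: "nat \<Rightarrow> nat list \<Rightarrow> nat list list" where
  "spl m [] = [[]]"
| "spl m (x # xs) = (if x = m then [] # spl m xs else
     (case spl m xs of [] \<Rightarrow> [[x]] | y # ys \<Rightarrow> (x # y) # ys))"

lemma spl_ne: "spl m xs \<noteq> []"
  by (induction xs) (auto split: list.split)

fun join :: "nat \<Rightarrow> nat list list \<Rightarrow> nat list" where
  "join m [] = []"
| "join m [l] = l"
| "join m (l # l' # ls) = l @ m # join m (l' # ls)"

lemma join_Cons_hd: "join m ((x # y) # ys) = x # join m (y # ys)"
  by (cases ys) auto

lemma join_Cons_ne: "ls \<noteq> [] \<Longrightarrow> join m (l # ls) = l @ m # join m ls"
  by (cases ls) auto

lemma spl_append: "m \<notin> set s \<Longrightarrow> spl m (s @ xs) = (case spl m xs of y # ys \<Rightarrow> (s @ y) # ys)"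
proof (induction s)
  case Nil
  then show ?case using spl_ne[of m xs] by (cases "spl m xs") auto
next
  case (Cons a s)
  then show ?case using spl_ne[of m xs] by (cases "spl m xs") auto
qed

lemma spl_mid: "m \<notin> set s \<Longrightarrow> spl m (s @ m # r) = s # spl m r"
  using spl_append[of m s "m # r"] by simp

lemma spl_nomem: "m \<notin> set xs \<Longrightarrow> spl m xs = [xs]"
  using spl_append[of m xs "[]"] by simp

lemma join_spl: "join m (spl m xs) = xs"
proof (induction xs)
  case Nil
  then show ?case by simp
next
  case (Cons x xs)
  show ?case
  proof (cases "x = m")
    case True
    then show ?thesis using Cons spl_ne[of m xs] by (simp add: join_Cons_ne)
  next
    case False
    then show ?thesis using Cons spl_ne[of m xs]
      by (cases "spl m xs") (auto simp: join_Cons_hd)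
  qed
qed

lemma spl_join: "ls \<noteq> [] \<Longrightarrow> \<forall>l\<in>set ls. m \<notin> set l \<Longrightarrow> spl m (join m ls) = ls"
proof (induction m ls rule: join.induct)
  case (1 m)
  then show ?case by simp
next
  case (2 m l)
  then show ?case by (simp add: spl_nomem)
next
  case (3 m l l' ls)
  then show ?case by (simp add: spl_mid)
qed

lemma length_spl: "length (spl m xs) = count (mset xs) m + 1"
proof (induction xs)
  case Nil
  then show ?case by simp
next
  case (Cons x xs)
  then show ?case using spl_ne[of m xs] by (cases "spl m xs") auto
qed

fun ispart :: "nat set \<Rightarrow> nat set list \<Rightarrow> bool" where
  "ispart T [] = (T = {})"
| "ispart T (A # As) = (A \<subseteq> T \<and> ispart (T - A) As)"

lemma ispart_Union: "ispart T As \<Longrightarrow> \<Union>(set As) = T"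
  by (induction As arbitrary: T) auto

lemma ispart_sub: "ispart T As \<Longrightarrow> A \<in> set As \<Longrightarrow> A \<subseteq> T"
  using ispart_Union by blast

lemma count_kset: "finite T \<Longrightarrow> count (\<Sum>i\<in>T. replicate_mset k i) b = (if b \<in> T then k else 0)"
proof -
  assume "finite T"
  have "count (\<Sum>i\<in>T. replicate_mset k i) b = (\<Sum>i\<in>T. if b = i then k else 0)"
    by (simp add: count_sum)
  also have "\<dots> = (if b \<in> T then k else 0)"
    using \<open>finite T\<close> by (simp add: sum.delta)
  finally show ?thesis .
qed


locale stir =
  fixes k :: nat and q t u :: "'a::field_char_0"
  assumes k1: "k \<ge> 1"
begin

definition pw :: "nat \<Rightarrow> nat \<Rightarrow> 'a" where
  "pw a b = (if a < b then q else if b < a then t else u)"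

fun PW :: "nat list \<Rightarrow> 'a" where
  "PW (a # b # r) = pw a b * PW (b # r)"
| "PW _ = 1"

lemma PW_split: "PW (xs @ c # ys) = PW (xs @ [c]) * PW (c # ys)"
proof (induction xs)
  case Nil
  then show ?case by simp
next
  case (Cons a xs)
  then show ?case by (cases xs) (auto simp: mult.assoc)
qed

lemma PW_ends: "\<sigma> \<noteq> [] \<Longrightarrow> PW (a # \<sigma> @ [b]) = pw a (hd \<sigma>) * PW \<sigma> * pw (last \<sigma>) b"
proof -
  assume ne: "\<sigma> \<noteq> []"
  have 1: "PW (a # \<sigma> @ [b]) = pw a (hd \<sigma>) * PW (\<sigma> @ [b])"
    using ne by (cases \<sigma>) auto
  have "PW (\<sigma> @ [b]) = PW (butlast \<sigma> @ last \<sigma> # [b])"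
    using ne by (metis append_butlast_last_id append_eq_append_conv2 append_self_conv2 append_Cons)
  also have "\<dots> = PW (butlast \<sigma> @ [last \<sigma>]) * PW [last \<sigma>, b]" by (rule PW_split)
  also have "\<dots> = PW \<sigma> * pw (last \<sigma>) b" using ne by simp
  finally show ?thesis using 1 by (simp add: mult.assoc)
qed

lemma PW_ends0: "\<sigma> \<noteq> [] \<Longrightarrow> \<forall>y\<in>set \<sigma>. a < y \<and> b < y \<Longrightarrow> PW (a # \<sigma> @ [b]) = PW (0 # \<sigma> @ [0])"
proof -
  assume ne: "\<sigma> \<noteq> []" and h: "\<forall>y\<in>set \<sigma>. a < y \<and> b < y"
  have "hd \<sigma> \<in> set \<sigma>" "last \<sigma> \<in> set \<sigma>" using ne by auto
  then have "a < hd \<sigma>" "0 < hd \<sigma>" "b < last \<sigma>" "0 < last \<sigma>" using h by auto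
  then show ?thesis using ne by (simp add: PW_ends pw_def)
qed

lemma PW_nth: "PW ys = (\<Prod>i<length ys - 1. pw (ys ! i) (ys ! (i + 1)))"
proof (induction ys rule: PW.induct)
  case (1 a b r)
  then show ?case by (simp add: prod.lessThan_Suc_shift del: prod.lessThan_Suc)
qed auto

lemma pad_nth: "i \<le> Suc (length xs) \<Longrightarrow>
  (0 # xs @ [0]) ! i = (if i = 0 then 0 else if i \<le> length xs then xs ! (i - 1) else 0)"
  by (cases i) (auto simp: nth_append)

lemma prod_if_pow: "finite A \<Longrightarrow> (\<Prod>i\<in>A. if P i then (c::'a) else 1) = c ^ card {i\<in>A. P i}"
  by (simp add: prod.If_cases Int_def conj_commute)

definition wt :: "nat list \<Rightarrow> 'a" where
  "wt xs = (if xs = [] then 1 else PW (0 # xs @ [0]))"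

lemma weight_wt:
  assumes pos: "\<forall>y\<in>set xs. 0 < y"
  shows "q ^ asc xs * t ^ des xs * u ^ plat xs = wt xs"
proof (cases "xs = []")
  case True
  then show ?thesis by (simp add: wt_def asc_def des_def plat_def)
next
  case False
  define r where "r = length xs"
  have r1: "r \<ge> 1" using False r_def by (cases xs) auto
  define ys where "ys = 0 # xs @ [0]"
  have ysn: "\<And>i. i \<le> Suc r \<Longrightarrow> ys ! i = (if i = 0 then 0 else if i \<le> r then pos1 xs i else 0)"
    unfolding ys_def r_def pos1_def by (rule pad_nth)
  have xpos: "\<And>i. 1 \<le> i \<Longrightarrow> i \<le> r \<Longrightarrow> pos1 xs i > 0"
  proof -
    fix i assume "1 \<le> i" "i \<le> r"
    then have "i - 1 < length xs" using r_def by simp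
    then have "xs ! (i - 1) \<in> set xs" by (rule nth_mem)
    then show "pos1 xs i > 0" using pos by (simp add: pos1_def)
  qed
  have "PW ys = (\<Prod>i<Suc r. pw (ys ! i) (ys ! (i + 1)))"
    unfolding PW_nth by (simp add: ys_def r_def)
  also have "\<dots> = (\<Prod>i<Suc r. (if ys ! i < ys ! (i+1) then q else 1) *
      (if ys ! (i+1) < ys ! i then t else 1) * (if ys ! i = ys ! (i+1) then u else 1))"
    by (rule prod.cong) (auto simp: pw_def)
  also have "\<dots> = q ^ card {i\<in>{..<Suc r}. ys ! i < ys ! (i+1)} *
      t ^ card {i\<in>{..<Suc r}. ys ! (i+1) < ys ! i} * u ^ card {i\<in>{..<Suc r}. ys ! i = ys ! (i+1)}"
    by (simp only: prod.distrib prod_if_pow[OF finite_lessThan])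
  also have "{i\<in>{..<Suc r}. ys ! i < ys ! (i+1)} = {i\<in>{0..<length xs}. i = 0 \<or> pos1 xs i < pos1 xs (i + 1)}"
  proof (rule set_eqI, rule iffI)
    fix i assume "i \<in> {i\<in>{..<Suc r}. ys ! i < ys ! (i+1)}"
    then have i: "i < Suc r" "ys ! i < ys ! (i+1)" by auto
    then show "i \<in> {i\<in>{0..<length xs}. i = 0 \<or> pos1 xs i < pos1 xs (i + 1)}"
      using ysn[of i] ysn[of "i+1"] r_def by (auto split: if_splits)
  next
    fix i assume "i \<in> {i\<in>{0..<length xs}. i = 0 \<or> pos1 xs i < pos1 xs (i + 1)}"
    then have i: "i < r" "i = 0 \<or> pos1 xs i < pos1 xs (i + 1)" using r_def by auto
    then show "i \<in> {i\<in>{..<Suc r}. ys ! i < ys ! (i+1)}"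
      using ysn[of i] ysn[of "i+1"] xpos[of 1] r1 by auto
  qed
  also have "{i\<in>{..<Suc r}. ys ! (i+1) < ys ! i} = {i\<in>{1..length xs}. pos1 xs i > pos1 xs (i + 1) \<or> i = length xs}"
  proof (rule set_eqI, rule iffI)
    fix i assume "i \<in> {i\<in>{..<Suc r}. ys ! (i+1) < ys ! i}"
    then have i: "i < Suc r" "ys ! (i+1) < ys ! i" by auto
    then show "i \<in> {i\<in>{1..length xs}. pos1 xs i > pos1 xs (i + 1) \<or> i = length xs}"
      using ysn[of i] ysn[of "i+1"] r_def by (auto split: if_splits)
  next
    fix i assume "i \<in> {i\<in>{1..length xs}. pos1 xs i > pos1 xs (i + 1) \<or> i = length xs}"
    then have i: "1 \<le> i" "i \<le> r" "pos1 xs i > pos1 xs (i + 1) \<or> i = r" using r_def by auto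
    then show "i \<in> {i\<in>{..<Suc r}. ys ! (i+1) < ys ! i}"
      using ysn[of i] ysn[of "i+1"] xpos[of i] by auto
  qed
  also have "{i\<in>{..<Suc r}. ys ! i = ys ! (i+1)} = {i\<in>{1..<length xs}. pos1 xs i = pos1 xs (i + 1)}"
  proof (rule set_eqI, rule iffI)
    fix i assume "i \<in> {i\<in>{..<Suc r}. ys ! i = ys ! (i+1)}"
    then have i: "i < Suc r" "ys ! i = ys ! (i+1)" by auto
    then show "i \<in> {i\<in>{1..<length xs}. pos1 xs i = pos1 xs (i + 1)}"
      using ysn[of i] ysn[of "i+1"] r_def xpos[of 1] xpos[of i] xpos[of "i+1"] r1
      by (auto split: if_splits)
  next
    fix i assume "i \<in> {i\<in>{1..<length xs}. pos1 xs i = pos1 xs (i + 1)}"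
    then have i: "1 \<le> i" "i < r" "pos1 xs i = pos1 xs (i + 1)" using r_def by auto
    then show "i \<in> {i\<in>{..<Suc r}. ys ! i = ys ! (i+1)}"
      using ysn[of i] ysn[of "i+1"] by auto
  qed
  finally have "PW ys = q ^ asc xs * t ^ des xs * u ^ plat xs"
    by (simp add: asc_def des_def plat_def)
  then show ?thesis using False by (simp add: wt_def ys_def)
qed

end


definition E :: "(nat \<Rightarrow> 'a::field_char_0) \<Rightarrow> 'a fps" where
  "E f = Abs_fps (\<lambda>j. f j / fact j)"

lemma sum_pow_card:
  assumes "finite T"
  shows "(\<Sum>A\<in>Pow T. g (card A)) = (\<Sum>j\<le>card T. of_nat (card T choose j) * (g j :: 'a::comm_semiring_1))"
proof -
  have img: "card ` Pow T \<subseteq> {..card T}" using assms by (auto intro: card_mono)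
  have "(\<Sum>A\<in>Pow T. g (card A)) = (\<Sum>j\<le>card T. \<Sum>A\<in>{A. A \<in> Pow T \<and> card A = j}. g (card A))"
    using sum.group[OF _ _ img, of "\<lambda>A. g (card A)"] assms by simp
  also have "\<dots> = (\<Sum>j\<le>card T. of_nat (card T choose j) * g j)"
  proof (rule sum.cong)
    fix j assume "j \<in> {..card T}"
    have "(\<Sum>A\<in>{A. A \<in> Pow T \<and> card A = j}. g (card A)) = (\<Sum>A\<in>{A. A \<subseteq> T \<and> card A = j}. g j)"
      by (rule sum.cong) auto
    also have "\<dots> = of_nat (card {A. A \<subseteq> T \<and> card A = j}) * g j" by simp
    also have "\<dots> = of_nat (card T choose j) * g j" using n_subsets[OF assms] by simp
    finally show "(\<Sum>A\<in>{A. A \<in> Pow T \<and> card A = j}. g (card A)) = of_nat (card T choose j) * g j" .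
  qed simp
  finally show ?thesis .
qed

lemma ispart_finite: "finite T \<Longrightarrow> finite {Ss. ispart T Ss \<and> length Ss = n}"
proof -
  assume "finite T"
  have "{Ss. ispart T Ss \<and> length Ss = n} \<subseteq> {Ss. set Ss \<subseteq> Pow T \<and> length Ss = n}"
    using ispart_sub by blast
  moreover have "finite {Ss. set Ss \<subseteq> Pow T \<and> length Ss = n}"
    using \<open>finite T\<close> by (intro finite_lists_length_eq) auto
  ultimately show ?thesis by (rule finite_subset)
qed

lemma ispart_Suc: "{Ss. ispart T Ss \<and> length Ss = Suc n} =
   (\<lambda>(A, Ss). A # Ss) ` (SIGMA A:Pow T. {Ss. ispart (T - A) Ss \<and> length Ss = n})"
proof (rule set_eqI, rule iffI)
  fix Ss assume "Ss \<in> {Ss. ispart T Ss \<and> length Ss = Suc n}"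
  then show "Ss \<in> (\<lambda>(A, Ss). A # Ss) ` (SIGMA A:Pow T. {Ss. ispart (T - A) Ss \<and> length Ss = n})"
    by (cases Ss) (auto simp: image_iff)
qed auto

lemma count_part:
  assumes "finite T"
  shows "(\<Sum>Ss\<in>{Ss. ispart T Ss \<and> length Ss = length fs}. prod_list (map2 (\<lambda>f A. f (card A)) fs Ss))
     = fact (card T) * (prod_list (map E fs)) $ card T"
  using assms
proof (induction fs arbitrary: T)
  case Nil
  have "{Ss. ispart T Ss \<and> length Ss = length ([]::(nat \<Rightarrow> 'a) list)} = (if T = {} then {[]} else {})"
    by auto
  then show ?case using Nil by simp
next
  case (Cons f fs)
  define N where "N = card T"
  define C where "C = prod_list (map E fs)"
  have inj: "inj_on (\<lambda>(A, Ss). A # Ss) X" for X :: "(nat set \<times> nat set list) set"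
    by (auto simp: inj_on_def)
  have "(\<Sum>Ss\<in>{Ss. ispart T Ss \<and> length Ss = length (f # fs)}. prod_list (map2 (\<lambda>f A. f (card A)) (f # fs) Ss))
      = (\<Sum>(A, Ss)\<in>(SIGMA A:Pow T. {Ss. ispart (T - A) Ss \<and> length Ss = length fs}).
          f (card A) * prod_list (map2 (\<lambda>f A. f (card A)) fs Ss))"
    by (simp only: length_Cons ispart_Suc sum.reindex[OF inj]) (simp add: case_prod_beta)
  also have "\<dots> = (\<Sum>A\<in>Pow T. \<Sum>Ss\<in>{Ss. ispart (T - A) Ss \<and> length Ss = length fs}.
          f (card A) * prod_list (map2 (\<lambda>f A. f (card A)) fs Ss))"
    using Cons.prems by (subst sum.Sigma) (auto intro: ispart_finite)
  also have "\<dots> = (\<Sum>A\<in>Pow T. f (card A) * (fact (N - card A) * C $ (N - card A)))"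
  proof (rule sum.cong)
    fix A assume A: "A \<in> Pow T"
    have fin: "finite (T - A)" using Cons.prems by simp
    have cA: "card (T - A) = N - card A" using A Cons.prems unfolding N_def
      by (simp add: card_Diff_subset finite_subset)
    show "(\<Sum>Ss\<in>{Ss. ispart (T - A) Ss \<and> length Ss = length fs}.
          f (card A) * prod_list (map2 (\<lambda>f A. f (card A)) fs Ss)) = f (card A) * (fact (N - card A) * C $ (N - card A))"
      using Cons.IH[OF fin] by (simp add: sum_distrib_left[symmetric] cA C_def)
  qed simp
  also have "\<dots> = (\<Sum>j\<le>N. of_nat (N choose j) * (f j * (fact (N - j) * C $ (N - j))))"
    unfolding N_def by (rule sum_pow_card[OF Cons.prems])
  also have "\<dots> = (\<Sum>j\<le>N. fact N * (f j / fact j * C $ (N - j)))"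
  proof (rule sum.cong)
    fix j assume "j \<in> {..N}"
    then have "j \<le> N" by simp
    then show "of_nat (N choose j) * (f j * (fact (N - j) * C $ (N - j))) = fact N * (f j / fact j * C $ (N - j))"
      by (simp add: binomial_fact field_simps)
  qed simp
  also have "\<dots> = fact N * (E f * C) $ N"
    by (simp add: fps_mult_nth E_def sum_distrib_left atLeast0AtMost)
  finally show ?case by (simp add: N_def C_def)
qed


lemma count_mset_eq_k:
  "finite T \<Longrightarrow> (\<forall>b. count M b = (if b \<in> T then k else 0)) \<Longrightarrow> M = (\<Sum>i\<in>T. replicate_mset k i)"
  by (simp add: multiset_eq_iff count_kset)

lemma spl_good:
  "av xs \<Longrightarrow> \<forall>y\<in>set xs. m \<le> y \<Longrightarrow> \<forall>b\<in>set xs - {m}. count (mset xs) b = k \<Longrightarrow>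
   ispart (set xs - {m}) (map set (spl m xs)) \<and>
   (\<forall>\<sigma>\<in>set (spl m xs). av \<sigma> \<and> mset \<sigma> = (\<Sum>i\<in>set \<sigma>. replicate_mset k i) \<and> m \<notin> set \<sigma>)"
proof (induction "length xs" arbitrary: xs rule: less_induct)
  case less
  show ?case
  proof (cases "m \<in> set xs")
    case False
    have "mset xs = (\<Sum>i\<in>set xs. replicate_mset k i)"
    proof (rule count_mset_eq_k)
      show "\<forall>b. count (mset xs) b = (if b \<in> set xs then k else 0)"
        using less.prems(3) False by (auto simp: count_eq_zero_iff)
    qed simp
    then show ?thesis using False less.prems by (simp add: spl_nomem)
  next
    case True
    obtain s r where xs: "xs = s @ m # r" and ms: "m \<notin> set s"
      using split_list_first[OF True] by blast
    have avs: "av s" using less.prems(1) xs av_appendD1 by blast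
    have avr: "av r" using less.prems(1) xs av_appendD2[of s "m # r"] av_appendD2[of "[m]" r] by simp
    have disj: "set s \<inter> set r = {}"
    proof (rule ccontr)
      assume "set s \<inter> set r \<noteq> {}"
      then obtain b where b: "b \<in> set s" "b \<in> set r" by blast
      have "b \<le> m" using av_mid[OF less.prems(1)[unfolded xs] b] .
      moreover have "m \<le> b" using less.prems(2) xs b by auto
      ultimately show False using ms b by auto
    qed
    have lr: "length r < length xs" using xs by simp
    have IH: "ispart (set r - {m}) (map set (spl m r)) \<and>
      (\<forall>\<sigma>\<in>set (spl m r). av \<sigma> \<and> mset \<sigma> = (\<Sum>i\<in>set \<sigma>. replicate_mset k i) \<and> m \<notin> set \<sigma>)"
    proof (rule less.hyps[OF lr avr])
      show "\<forall>y\<in>set r. m \<le> y" using less.prems(2) xs by auto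
      show "\<forall>b\<in>set r - {m}. count (mset r) b = k"
      proof
        fix b assume b: "b \<in> set r - {m}"
        then have "b \<notin> set s" using disj by auto
        then have c0: "count (mset s) b = 0" by (simp add: count_eq_zero_iff)
        have "b \<in> set xs - {m}" using xs b by auto
        then have ck: "count (mset xs) b = k" using less.prems(3) by blast
        have "count (mset xs) b = count (mset s) b + count (mset r) b" using xs b by simp
        then show "count (mset r) b = k" using c0 ck by simp
      qed
    qed
    have ms_eq: "mset s = (\<Sum>i\<in>set s. replicate_mset k i)"
    proof (rule count_mset_eq_k)
      show "\<forall>b. count (mset s) b = (if b \<in> set s then k else 0)"
      proof
        fix b
        show "count (mset s) b = (if b \<in> set s then k else 0)"
        proof (cases "b \<in> set s")
          case True
          then have br: "b \<notin> set r" "b \<noteq> m" using disj ms by auto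
          then have c0: "count (mset r) b = 0" by (simp add: count_eq_zero_iff)
          have "b \<in> set xs - {m}" using xs True br by auto
          then have ck: "count (mset xs) b = k" using less.prems(3) by blast
          have "count (mset xs) b = count (mset s) b + count (mset r) b" using xs br by simp
          then show ?thesis using c0 ck True by simp
        qed (simp add: count_eq_zero_iff)
      qed
    qed simp
    have seteq: "set xs - {m} - set s = set r - {m}" using xs disj by auto
    have "spl m xs = s # spl m r" using xs ms by (simp add: spl_mid)
    then show ?thesis using IH ms_eq avs ms seteq xs by auto
  qed
qed

lemma list_all2_map_eq: "list_all2 (\<lambda>x y. f x = y) xs ys \<Longrightarrow> map f xs = ys"
  by (induction xs ys rule: list_all2_induct) auto

context stir
begin

definition SP :: "nat set \<Rightarrow> nat list set" where
  "SP S = {xs. mset xs = (\<Sum>i\<in>S. replicate_mset k i) \<and> av xs}"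

definition F :: "nat set \<Rightarrow> 'a" where
  "F S = (\<Sum>xs\<in>SP S. wt xs)"

definition LS :: "nat set list \<Rightarrow> nat list list set" where
  "LS Ts = {\<sigma>s. list_all2 (\<lambda>\<sigma> T. \<sigma> \<in> SP T) \<sigma>s Ts}"

lemma SP_finite: "finite (SP S)"
proof -
  obtain xs0 where "mset xs0 = (\<Sum>i\<in>S. replicate_mset k i)" using ex_mset by blast
  then have "SP S \<subseteq> {ys. mset ys = mset xs0}" by (auto simp: SP_def)
  then show ?thesis using mset_eq_finite finite_subset by blast
qed

lemma SP_set: "finite S \<Longrightarrow> xs \<in> SP S \<Longrightarrow> set xs = S"
proof -
  assume f: "finite S" and x: "xs \<in> SP S"
  have "\<And>b. count (mset xs) b = (if b \<in> S then k else 0)"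
    using x f by (simp add: SP_def count_kset)
  moreover have "\<And>b. b \<in> set xs \<longleftrightarrow> count (mset xs) b \<noteq> 0"
    by (simp add: count_eq_zero_iff)
  ultimately show ?thesis using k1 by (auto split: if_splits)
qed

lemma SP_empty: "SP {} = {[]}"
  by (auto simp: SP_def av_def)

lemma LS_finite: "finite (LS Ts)"
proof (induction Ts)
  case Nil
  then show ?case by (simp add: LS_def)
next
  case (Cons T Ts)
  have "LS (T # Ts) = (\<lambda>(\<sigma>, \<sigma>s). \<sigma> # \<sigma>s) ` (SP T \<times> LS Ts)"
    by (auto simp: LS_def list_all2_Cons2 image_iff)
  then show ?case using Cons SP_finite by simp
qed

lemma join_good:
  "list_all2 (\<lambda>\<sigma> T. \<sigma> \<in> SP T) \<sigma>s Ts \<Longrightarrow> ispart U Ts \<Longrightarrow> Ts \<noteq> [] \<Longrightarrow> finite U \<Longrightarrow>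
   \<forall>y\<in>U. m < y \<Longrightarrow>
   av (join m \<sigma>s) \<and> (\<forall>b. count (mset (join m \<sigma>s)) b = (if b \<in> U then k else 0) + (if b = m then length Ts - 1 else 0))"
proof (induction \<sigma>s arbitrary: Ts U)
  case Nil
  then show ?case by simp
next
  case (Cons \<sigma> \<sigma>s)
  obtain T Ts' where Ts: "Ts = T # Ts'" and sT: "\<sigma> \<in> SP T" and rest: "list_all2 (\<lambda>\<sigma> T. \<sigma> \<in> SP T) \<sigma>s Ts'"
    using Cons.prems(1) by (cases Ts) auto
  have TU: "T \<subseteq> U" and pr: "ispart (U - T) Ts'" using Cons.prems(2) Ts by auto
  have fT: "finite T" using TU Cons.prems(4) finite_subset by blast
  have set\<sigma>: "set \<sigma> = T" using SP_set[OF fT sT] .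
  have av\<sigma>: "av \<sigma>" and c\<sigma>: "\<And>b. count (mset \<sigma>) b = (if b \<in> T then k else 0)"
    using sT fT by (auto simp: SP_def count_kset)
  show ?case
  proof (cases "\<sigma>s = []")
    case True
    then have "Ts' = []" using rest by simp
    then have "U = T" using pr TU by auto
    then show ?thesis using True Ts av\<sigma> c\<sigma> \<open>Ts' = []\<close> by simp
  next
    case False
    have Ts'ne: "Ts' \<noteq> []" using rest False by (cases Ts') auto
    have IH: "av (join m \<sigma>s) \<and> (\<forall>b. count (mset (join m \<sigma>s)) b = (if b \<in> U - T then k else 0) + (if b = m then length Ts' - 1 else 0))"
      using Cons.IH[OF rest pr Ts'ne] Cons.prems by auto
    define R where "R = join m \<sigma>s"
    have setR: "set R \<subseteq> (U - T) \<union> {m}"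
    proof
      fix b assume "b \<in> set R"
      then have "count (mset R) b \<noteq> 0" by (simp add: count_eq_zero_iff)
      then show "b \<in> (U - T) \<union> {m}" using IH unfolding R_def by (auto split: if_splits)
    qed
    have geR: "\<forall>y\<in>set R. m \<le> y" using setR Cons.prems(5) by force
    have avR: "av (m # R)"
      using IH geR unfolding R_def by (intro av_Cons) auto
    have mU: "m \<notin> U" using Cons.prems(5) by auto
    have av: "av (\<sigma> @ m # R)"
      using av\<sigma> avR setR set\<sigma> mU TU by (intro av_append) auto
    have j: "join m (\<sigma> # \<sigma>s) = \<sigma> @ m # R" using False R_def by (simp add: join_Cons_ne)
    have cnt: "count (mset (\<sigma> @ m # R)) b = (if b \<in> U then k else 0) + (if b = m then length Ts - 1 else 0)" for b
      using IH c\<sigma>[of b] TU mU Ts Ts'ne unfolding R_def by (auto simp: Suc_diff_1)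
    show ?thesis using av cnt j by simp
  qed
qed

end


lemma list_all2_map_same: "list_all2 P xs (map f xs) \<longleftrightarrow> (\<forall>x\<in>set xs. P x (f x))"
  by (induction xs) auto

context stir
begin

lemma SP_ne: "finite S \<Longrightarrow> S \<noteq> {} \<Longrightarrow> xs \<in> SP S \<Longrightarrow> xs \<noteq> []"
  using SP_set by fastforce

lemma SP_count: "finite S \<Longrightarrow> xs \<in> SP S \<Longrightarrow> count (mset xs) b = (if b \<in> S then k else 0)"
  by (simp add: SP_def count_kset)

lemma Sg: "finite T \<Longrightarrow> \<forall>y\<in>T. a < y \<and> b < y \<Longrightarrow>
   (\<Sum>\<sigma>\<in>SP T. PW (a # \<sigma> @ [b])) = (if T = {} then pw a b else F T)"
proof -
  assume fT: "finite T" and h: "\<forall>y\<in>T. a < y \<and> b < y"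
  show ?thesis
  proof (cases "T = {}")
    case True
    then show ?thesis by (simp add: SP_empty)
  next
    case False
    have "(\<Sum>\<sigma>\<in>SP T. PW (a # \<sigma> @ [b])) = (\<Sum>\<sigma>\<in>SP T. wt \<sigma>)"
    proof (rule sum.cong)
      fix \<sigma> assume s: "\<sigma> \<in> SP T"
      have ne: "\<sigma> \<noteq> []" using SP_ne[OF fT False s] .
      have "set \<sigma> = T" using SP_set[OF fT s] .
      then have "PW (a # \<sigma> @ [b]) = PW (0 # \<sigma> @ [0])" using PW_ends0[OF ne] h by auto
      then show "PW (a # \<sigma> @ [b]) = wt \<sigma>" using ne by (simp add: wt_def)
    qed simp
    then show ?thesis using False by (simp add: F_def)
  qed
qed

lemma LS_Cons: "LS (T # Ts) = (\<lambda>(\<sigma>, \<sigma>s). \<sigma> # \<sigma>s) ` (SP T \<times> LS Ts)"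
  by (auto simp: LS_def list_all2_Cons2 image_iff)

lemma LS_length: "\<sigma>s \<in> LS Ts \<Longrightarrow> length \<sigma>s = length Ts"
  by (simp add: LS_def list_all2_lengthD)

lemma LS_cons_sum: "Ts \<noteq> [] \<Longrightarrow> (\<Sum>\<sigma>s\<in>LS (T # Ts). PW (a # join m \<sigma>s @ [b])) =
   (\<Sum>\<sigma>\<in>SP T. PW (a # \<sigma> @ [m])) * (\<Sum>\<sigma>s\<in>LS Ts. PW (m # join m \<sigma>s @ [b]))"
proof -
  assume ne: "Ts \<noteq> []"
  have inj: "inj_on (\<lambda>(\<sigma>, \<sigma>s). \<sigma> # \<sigma>s) X" for X :: "(nat list \<times> nat list list) set"
    by (auto simp: inj_on_def)
  have "(\<Sum>\<sigma>s\<in>LS (T # Ts). PW (a # join m \<sigma>s @ [b])) =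
      (\<Sum>(\<sigma>, \<sigma>s)\<in>SP T \<times> LS Ts. PW (a # join m (\<sigma> # \<sigma>s) @ [b]))"
    by (simp only: LS_Cons sum.reindex[OF inj]) (simp add: case_prod_beta)
  also have "\<dots> = (\<Sum>\<sigma>\<in>SP T. \<Sum>\<sigma>s\<in>LS Ts. PW (a # join m (\<sigma> # \<sigma>s) @ [b]))"
    by (rule sum.cartesian_product[symmetric])
  also have "\<dots> = (\<Sum>\<sigma>\<in>SP T. \<Sum>\<sigma>s\<in>LS Ts. PW (a # \<sigma> @ [m]) * PW (m # join m \<sigma>s @ [b]))"
  proof (intro sum.cong refl)
    fix \<sigma> \<sigma>s assume "\<sigma>s \<in> LS Ts"
    then have "\<sigma>s \<noteq> []" using LS_length ne by fastforce
    then have "join m (\<sigma> # \<sigma>s) = \<sigma> @ m # join m \<sigma>s" by (simp add: join_Cons_ne)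
    then have "a # join m (\<sigma> # \<sigma>s) @ [b] = (a # \<sigma>) @ m # (join m \<sigma>s @ [b])" by simp
    then show "PW (a # join m (\<sigma> # \<sigma>s) @ [b]) = PW (a # \<sigma> @ [m]) * PW (m # join m \<sigma>s @ [b])"
      using PW_split[of "a # \<sigma>" m "join m \<sigma>s @ [b]"] by simp
  qed
  also have "\<dots> = (\<Sum>\<sigma>\<in>SP T. PW (a # \<sigma> @ [m])) * (\<Sum>\<sigma>s\<in>LS Ts. PW (m # join m \<sigma>s @ [b]))"
    by (simp add: sum_product)
  finally show ?thesis .
qed

lemma LS_single: "(\<Sum>\<sigma>s\<in>LS [T]. PW (a # join m \<sigma>s @ [b])) = (\<Sum>\<sigma>\<in>SP T. PW (a # \<sigma> @ [b]))"
proof -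
  have "LS [T] = (\<lambda>\<sigma>. [\<sigma>]) ` SP T" by (auto simp: LS_def list_all2_Cons2 image_iff)
  moreover have "inj_on (\<lambda>\<sigma>. [\<sigma>]) (SP T)" by (auto simp: inj_on_def)
  ultimately show ?thesis by (simp add: sum.reindex)
qed

definition fa :: "nat \<Rightarrow> 'a" where
  "fa n = F {1..n}"

definition hf :: "'a \<Rightarrow> nat \<Rightarrow> 'a" where
  "hf c j = (if j = 0 then c else fa j)"

lemma hf_card: "finite T \<Longrightarrow> F T = fa (card T) \<Longrightarrow> (if T = {} then c else F T) = hf c (card T)"
  by (simp add: hf_def)

lemma chain:
  "\<forall>T\<in>set Ts. finite T \<and> (\<forall>y\<in>T. m < y) \<and> F T = fa (card T) \<Longrightarrow> length Ts = Suc j \<Longrightarrow> 0 < m \<Longrightarrow>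
   (\<Sum>\<sigma>s\<in>LS Ts. PW (m # join m \<sigma>s @ [0])) =
     prod_list (map2 (\<lambda>f A. f (card A)) (replicate j (hf u) @ [hf t]) Ts)"
proof (induction j arbitrary: Ts)
  case 0
  then obtain T where Ts: "Ts = [T]" by (cases Ts) auto
  have hT: "finite T" "\<forall>y\<in>T. m < y \<and> 0 < y" "F T = fa (card T)" using 0 Ts by auto
  have "pw m 0 = t" using 0 by (simp add: pw_def)
  then show ?case using Ts LS_single Sg[OF hT(1,2)] hf_card[OF hT(1,3)] by simp
next
  case (Suc j)
  then obtain T Ts' where Ts: "Ts = T # Ts'" by (cases Ts) auto
  have ne: "Ts' \<noteq> []" using Suc.prems Ts by auto
  have hT: "finite T" "\<forall>y\<in>T. m < y \<and> m < y" "F T = fa (card T)" using Suc.prems Ts by auto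
  have "pw m m = u" by (simp add: pw_def)
  moreover have "(\<Sum>\<sigma>s\<in>LS Ts'. PW (m # join m \<sigma>s @ [0])) =
     prod_list (map2 (\<lambda>f A. f (card A)) (replicate j (hf u) @ [hf t]) Ts')"
    using Suc.IH[of Ts'] Suc.prems Ts by auto
  ultimately show ?case using Ts LS_cons_sum[OF ne] Sg[OF hT(1,2)] hf_card[OF hT(1,3)] by simp
qed

lemma top:
  "\<forall>T\<in>set Ts. finite T \<and> (\<forall>y\<in>T. m < y) \<and> F T = fa (card T) \<Longrightarrow> length Ts = Suc k \<Longrightarrow> 0 < m \<Longrightarrow>
   (\<Sum>\<sigma>s\<in>LS Ts. PW (0 # join m \<sigma>s @ [0])) =
     prod_list (map2 (\<lambda>f A. f (card A)) (hf q # replicate (k - 1) (hf u) @ [hf t]) Ts)"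
proof -
  assume h: "\<forall>T\<in>set Ts. finite T \<and> (\<forall>y\<in>T. m < y) \<and> F T = fa (card T)" and l: "length Ts = Suc k"
    and m0: "0 < m"
  obtain T Ts' where Ts: "Ts = T # Ts'" using l by (cases Ts) auto
  have l': "length Ts' = Suc (k - 1)" using l Ts k1 by simp
  then have ne: "Ts' \<noteq> []" by auto
  have hT: "finite T" "\<forall>y\<in>T. 0 < y \<and> m < y" "F T = fa (card T)" using h Ts m0 by auto
  have "pw 0 m = q" using m0 by (simp add: pw_def)
  moreover have "(\<Sum>\<sigma>s\<in>LS Ts'. PW (m # join m \<sigma>s @ [0])) =
     prod_list (map2 (\<lambda>f A. f (card A)) (replicate (k - 1) (hf u) @ [hf t]) Ts')"
    using chain[OF _ l' m0] h Ts by auto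
  ultimately show ?thesis using Ts LS_cons_sum[OF ne] Sg[OF hT(1,2)] hf_card[OF hT(1,3)] by simp
qed

end


context stir
begin

lemma decomp:
  assumes fS: "finite S" and ne: "S \<noteq> {}" and m: "m = Min S"
  shows "F S = (\<Sum>Ss\<in>{Ss. ispart (S - {m}) Ss \<and> length Ss = Suc k}.
                 \<Sum>\<sigma>s\<in>LS Ss. PW (0 # join m \<sigma>s @ [0]))"
proof -
  have mS: "m \<in> S" using m fS ne by simp
  have mmin: "\<forall>y\<in>S. m \<le> y" using m fS by simp
  define D where "D = spl m ` SP S"
  define PT where "PT = {Ss. ispart (S - {m}) Ss \<and> length Ss = Suc k}"
  have good: "ispart (S - {m}) (map set (spl m xs)) \<and>
     (\<forall>\<sigma>\<in>set (spl m xs). av \<sigma> \<and> mset \<sigma> = (\<Sum>i\<in>set \<sigma>. replicate_mset k i) \<and> m \<notin> set \<sigma>)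
     \<and> length (spl m xs) = Suc k" if xs: "xs \<in> SP S" for xs
  proof -
    have sx: "set xs = S" using SP_set[OF fS xs] .
    have cx: "\<And>b. count (mset xs) b = (if b \<in> S then k else 0)" using SP_count[OF fS xs] .
    have avx: "av xs" using xs by (simp add: SP_def)
    have "ispart (set xs - {m}) (map set (spl m xs)) \<and>
     (\<forall>\<sigma>\<in>set (spl m xs). av \<sigma> \<and> mset \<sigma> = (\<Sum>i\<in>set \<sigma>. replicate_mset k i) \<and> m \<notin> set \<sigma>)"
      using spl_good[OF avx, of m k] sx cx mmin by auto
    moreover have "length (spl m xs) = Suc k" using length_spl[of m xs] cx[of m] mS by simp
    ultimately show ?thesis using sx by simp
  qed
  have "F S = (\<Sum>xs\<in>SP S. PW (0 # xs @ [0]))"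
    unfolding F_def by (rule sum.cong) (auto simp: wt_def dest: SP_ne[OF fS ne])
  also have "\<dots> = (\<Sum>xs\<in>SP S. PW (0 # join m (spl m xs) @ [0]))" by (simp add: join_spl)
  also have "\<dots> = (\<Sum>\<sigma>s\<in>D. PW (0 # join m \<sigma>s @ [0]))"
  proof -
    have "inj_on (spl m) (SP S)" by (metis join_spl inj_onI)
    then show ?thesis unfolding D_def by (simp add: sum.reindex)
  qed
  also have "\<dots> = (\<Sum>Ss\<in>PT. \<Sum>\<sigma>s\<in>{\<sigma>s. \<sigma>s \<in> D \<and> map set \<sigma>s = Ss}. PW (0 # join m \<sigma>s @ [0]))"
  proof (rule sum.group[symmetric])
    show "finite D" unfolding D_def using SP_finite by simp
    show "finite PT" unfolding PT_def using ispart_finite fS by simp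
    show "map set ` D \<subseteq> PT" unfolding D_def PT_def using good by auto
  qed
  also have "\<dots> = (\<Sum>Ss\<in>PT. \<Sum>\<sigma>s\<in>LS Ss. PW (0 # join m \<sigma>s @ [0]))"
  proof (rule sum.cong[OF refl])
    fix Ss assume Ss: "Ss \<in> PT"
    have pSs: "ispart (S - {m}) Ss" and lSs: "length Ss = Suc k" using Ss by (auto simp: PT_def)
    have "{\<sigma>s. \<sigma>s \<in> D \<and> map set \<sigma>s = Ss} = LS Ss"
    proof (rule set_eqI, rule iffI)
      fix \<sigma>s assume "\<sigma>s \<in> {\<sigma>s. \<sigma>s \<in> D \<and> map set \<sigma>s = Ss}"
      then obtain xs where xs: "xs \<in> SP S" "\<sigma>s = spl m xs" "map set \<sigma>s = Ss" by (auto simp: D_def)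
      have "\<forall>\<sigma>\<in>set \<sigma>s. \<sigma> \<in> SP (set \<sigma>)" using good[OF xs(1)] xs(2) by (auto simp: SP_def)
      then show "\<sigma>s \<in> LS Ss" using xs(3) by (auto simp: LS_def list_all2_map_same)
    next
      fix \<sigma>s assume "\<sigma>s \<in> LS Ss"
      then have la: "list_all2 (\<lambda>\<sigma> T. \<sigma> \<in> SP T) \<sigma>s Ss" by (simp add: LS_def)
      then have len: "length \<sigma>s = length Ss" and nth: "\<And>i. i < length \<sigma>s \<Longrightarrow> \<sigma>s ! i \<in> SP (Ss ! i)"
        by (auto simp: list_all2_conv_all_nth)
      have subS: "\<And>i. i < length \<sigma>s \<Longrightarrow> Ss ! i \<subseteq> S - {m}"
        using ispart_sub[OF pSs] len nth_mem by metis
      have setnth: "\<And>i. i < length \<sigma>s \<Longrightarrow> set (\<sigma>s ! i) = Ss ! i"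
        using SP_set nth subS fS by (meson finite_Diff finite_subset)
      have map: "map set \<sigma>s = Ss" using len setnth by (intro nth_equalityI) auto
      have Ssne: "Ss \<noteq> []" using lSs by auto
      have jg: "av (join m \<sigma>s) \<and> (\<forall>b. count (mset (join m \<sigma>s)) b =
          (if b \<in> S - {m} then k else 0) + (if b = m then length Ss - 1 else 0))"
      proof (rule join_good[OF la pSs Ssne])
        show "finite (S - {m})" using fS by simp
        show "\<forall>y\<in>S - {m}. m < y" using mmin by force
      qed
      have "mset (join m \<sigma>s) = (\<Sum>i\<in>S. replicate_mset k i)"
        using jg lSs mS fS by (intro count_mset_eq_k) auto
      then have jS: "join m \<sigma>s \<in> SP S" using jg by (simp add: SP_def)
      have "\<forall>\<sigma>\<in>set \<sigma>s. m \<notin> set \<sigma>"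
        using setnth subS by (metis Diff_iff in_set_conv_nth insertCI subsetD)
      moreover have "\<sigma>s \<noteq> []" using len Ssne by auto
      ultimately have "spl m (join m \<sigma>s) = \<sigma>s" by (simp add: spl_join)
      then have "\<sigma>s \<in> D" using jS unfolding D_def by (metis image_eqI)
      then show "\<sigma>s \<in> {\<sigma>s. \<sigma>s \<in> D \<and> map set \<sigma>s = Ss}" using map by simp
    qed
    then show "(\<Sum>\<sigma>s\<in>{\<sigma>s. \<sigma>s \<in> D \<and> map set \<sigma>s = Ss}. PW (0 # join m \<sigma>s @ [0])) =
               (\<Sum>\<sigma>s\<in>LS Ss. PW (0 # join m \<sigma>s @ [0]))" by simp
  qed
  finally show ?thesis unfolding PT_def .
qed

definition fl :: "(nat \<Rightarrow> 'a) list" where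
  "fl = hf q # replicate (k - 1) (hf u) @ [hf t]"

lemma length_fl: "length fl = Suc k"
  using k1 by (simp add: fl_def)

lemma recur:
  assumes fS: "finite S" and ne: "S \<noteq> {}" and S0: "0 \<notin> S"
    and IH: "\<And>T. finite T \<Longrightarrow> 0 \<notin> T \<Longrightarrow> card T < card S \<Longrightarrow> F T = fa (card T)"
  shows "F S = fact (card S - 1) * (prod_list (map E fl)) $ (card S - 1)"
proof -
  define m where "m = Min S"
  have mS: "m \<in> S" using m_def fS ne by simp
  have m0: "0 < m" using mS S0 by (cases m) auto
  have mmin: "\<forall>y\<in>S. m \<le> y" using m_def fS by simp
  have "F S = (\<Sum>Ss\<in>{Ss. ispart (S - {m}) Ss \<and> length Ss = Suc k}.
                 \<Sum>\<sigma>s\<in>LS Ss. PW (0 # join m \<sigma>s @ [0]))"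
    using decomp[OF fS ne m_def] .
  also have "\<dots> = (\<Sum>Ss\<in>{Ss. ispart (S - {m}) Ss \<and> length Ss = length fl}.
                 prod_list (map2 (\<lambda>f A. f (card A)) fl Ss))"
    unfolding length_fl
  proof (rule sum.cong[OF refl])
    fix Ss assume "Ss \<in> {Ss. ispart (S - {m}) Ss \<and> length Ss = Suc k}"
    then have pSs: "ispart (S - {m}) Ss" and lSs: "length Ss = Suc k" by auto
    have "\<forall>T\<in>set Ss. finite T \<and> (\<forall>y\<in>T. m < y) \<and> F T = fa (card T)"
    proof
      fix T assume T: "T \<in> set Ss"
      have sub: "T \<subseteq> S - {m}" using ispart_sub[OF pSs T] .
      have fT: "finite T" using sub fS finite_subset by blast
      have "card T \<le> card (S - {m})" using sub fS by (simp add: card_mono)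
      also have "\<dots> < card S" by (rule card_Diff1_less[OF fS mS])
      finally have "card T < card S" .
      moreover have "0 \<notin> T" using sub S0 by auto
      ultimately have "F T = fa (card T)" using IH fT by blast
      moreover have "\<forall>y\<in>T. m < y" using sub mmin by force
      ultimately show "finite T \<and> (\<forall>y\<in>T. m < y) \<and> F T = fa (card T)" using fT by simp
    qed
    then show "(\<Sum>\<sigma>s\<in>LS Ss. PW (0 # join m \<sigma>s @ [0])) = prod_list (map2 (\<lambda>f A. f (card A)) fl Ss)"
      using top[OF _ lSs m0] unfolding fl_def by simp
  qed
  also have "\<dots> = fact (card (S - {m})) * (prod_list (map E fl)) $ card (S - {m})"
    using count_part fS by blast
  also have "card (S - {m}) = card S - 1" using mS fS by simp
  finally show ?thesis .
qed

lemma F_card: "finite S \<Longrightarrow> 0 \<notin> S \<Longrightarrow> F S = fa (card S)"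
proof (induction "card S" arbitrary: S rule: less_induct)
  case less
  show ?case
  proof (cases "S = {}")
    case True
    then show ?thesis by (simp add: fa_def)
  next
    case False
    have IH: "\<And>T. finite T \<Longrightarrow> 0 \<notin> T \<Longrightarrow> card T < card S \<Longrightarrow> F T = fa (card T)"
      using less.hyps by blast
    have c: "card S \<noteq> 0" using False less.prems by simp
    have 1: "F S = fact (card S - 1) * (prod_list (map E fl)) $ (card S - 1)"
      using recur[OF less.prems(1) False less.prems(2) IH] .
    have 2: "F {1..card S} = fact (card {1..card S} - 1) * (prod_list (map E fl)) $ (card {1..card S} - 1)"
      by (rule recur) (use c IH in auto)
    show ?thesis using 1 2 by (simp add: fa_def)
  qed
qed

lemma fa0: "fa 0 = 1"
  by (simp add: fa_def F_def SP_empty wt_def)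

lemma fa_Suc: "fa (Suc n) = fact n * (prod_list (map E fl)) $ n"
proof -
  have "F {1..Suc n} = fact (card {1..Suc n} - 1) * (prod_list (map E fl)) $ (card {1..Suc n} - 1)"
    by (rule recur) (auto intro: F_card)
  then show ?thesis by (simp add: fa_def)
qed

lemma egf_eq: "stirling_egf k q t u = Abs_fps (\<lambda>n. fa n / fact n)"
proof -
  have "stirling_perms k n = SP {1..n}" for n
    by (auto simp: stirling_perms_def SP_def avoids212_av)
  moreover have "(\<Sum>xs\<in>SP {1..n}. q ^ asc xs * t ^ des xs * u ^ plat xs) = fa n" for n
    unfolding fa_def F_def
  proof (rule sum.cong[OF refl])
    fix xs assume "xs \<in> SP {1..n}"
    then have "set xs = {1..n}" using SP_set by blast
    then show "q ^ asc xs * t ^ des xs * u ^ plat xs = wt xs" by (intro weight_wt) auto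
  qed
  ultimately show ?thesis by (simp add: stirling_egf_def)
qed

lemma main:
  "fps_deriv (stirling_egf k q t u) =
           (stirling_egf k q t u - 1 + fps_const q) * (stirling_egf k q t u - 1 + fps_const t)
           * (stirling_egf k q t u - 1 + fps_const u) ^ (k - 1)
         \<and> fps_nth (stirling_egf k q t u) 0 = 1"
proof -
  define P where "P = stirling_egf k q t u"
  have P: "P = Abs_fps (\<lambda>n. fa n / fact n)" using egf_eq P_def by simp
  have EQ: "E (hf c) = P - 1 + fps_const c" for c
    by (rule fps_ext) (auto simp: P E_def hf_def fa0)
  have pl: "prod_list (map E fl) = (P - 1 + fps_const q) * (P - 1 + fps_const t) * (P - 1 + fps_const u) ^ (k - 1)"
    by (simp add: fl_def EQ ac_simps)
  have "fps_deriv P = prod_list (map E fl)"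
  proof (rule fps_ext)
    fix n
    have "fps_deriv P $ n = of_nat (Suc n) * (fa (Suc n) / fact (Suc n))" by (simp add: P)
    also have "\<dots> = of_nat (Suc n) * fa (Suc n) / (of_nat (Suc n) * fact n)"
      by (simp only: fact_Suc times_divide_eq_right)
    also have "\<dots> = fa (Suc n) / fact n"
      by (rule mult_divide_mult_cancel_left) (simp del: of_nat_Suc)
    also have "\<dots> = (prod_list (map E fl)) $ n" by (simp add: fa_Suc)
    finally show "fps_deriv P $ n = (prod_list (map E fl)) $ n" .
  qed
  moreover have "P $ 0 = 1" by (simp add: P fa0)
  ultimately show ?thesis using pl P_def by simp
qed

end


theorem theorem4p7:
  fixes k :: nat and q t u :: "'a::field_char_0"
  assumes "k \<ge> 1"
  shows "fps_deriv (stirling_egf k q t u) =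
           (stirling_egf k q t u - 1 + fps_const q) * (stirling_egf k q t u - 1 + fps_const t)
           * (stirling_egf k q t u - 1 + fps_const u) ^ (k - 1)
         \<and> fps_nth (stirling_egf k q t u) 0 = 1"
proof -
  interpret stir k q t u by unfold_locales (rule assms)
  show ?thesis by (rule main)
qed

end
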